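(* Let $R$ be a commutative ring with $1$ and $I$ an ideal of $R$ which is not contained in any minimal prime ideal of $R$. If $I$ is a projective $R$-module, then $I$ is a finitely generated ideal. *)

theory Defs
  imports "HOL-Algebra.Ideal" "HOL-Library.FuncSet"
begin

definition minimal_prime :: "('a, 'c) ring_scheme \<Rightarrow> 'a set \<Rightarrow> bool" where
  "minimal_prime R P \<longleftrightarrow> primeideal P R \<and> (\<forall>Q. primeideal Q R \<and> Q \<subseteq> P \<longrightarrow> Q = P)"

definition fg_ideal :: "('a, 'c) ring_scheme \<Rightarrow> 'a set \<Rightarrow> bool" where
  "fg_ideal R I \<longleftrightarrow> (\<exists>S. finite S \<and> S \<subseteq> carrier R \<and> I = Idl\<^bsub>R\<^esub> S)"

definition free_carrier :: "('a, 'c) ring_scheme \<Rightarrow> 'b set \<Rightarrow> ('b \<Rightarrow> 'a) set" where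
  "free_carrier R J = {f. f \<in> J \<rightarrow>\<^sub>E carrier R \<and> finite {j \<in> J. f j \<noteq> \<zero>\<^bsub>R\<^esub>}}"

definition free_add :: "('a, 'c) ring_scheme \<Rightarrow> 'b set \<Rightarrow> ('b \<Rightarrow> 'a) \<Rightarrow> ('b \<Rightarrow> 'a) \<Rightarrow> ('b \<Rightarrow> 'a)" where
  "free_add R J f g = (\<lambda>j\<in>J. f j \<oplus>\<^bsub>R\<^esub> g j)"

definition free_smult :: "('a, 'c) ring_scheme \<Rightarrow> 'b set \<Rightarrow> 'a \<Rightarrow> ('b \<Rightarrow> 'a) \<Rightarrow> ('b \<Rightarrow> 'a)" where
  "free_smult R J r f = (\<lambda>j\<in>J. r \<otimes>\<^bsub>R\<^esub> f j)"

definition summand_of_free :: "('a, 'c) ring_scheme \<Rightarrow> 'a set \<Rightarrow> 'b set \<Rightarrow> bool" where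
  "summand_of_free R I J \<longleftrightarrow>
     (\<exists>s p. s \<in> I \<rightarrow> free_carrier R J \<and> p \<in> free_carrier R J \<rightarrow> I
        \<and> (\<forall>a\<in>I. \<forall>b\<in>I. s (a \<oplus>\<^bsub>R\<^esub> b) = free_add R J (s a) (s b))
        \<and> (\<forall>r\<in>carrier R. \<forall>a\<in>I. s (r \<otimes>\<^bsub>R\<^esub> a) = free_smult R J r (s a))
        \<and> (\<forall>f\<in>free_carrier R J. \<forall>g\<in>free_carrier R J. p (free_add R J f g) = p f \<oplus>\<^bsub>R\<^esub> p g)
        \<and> (\<forall>r\<in>carrier R. \<forall>f\<in>free_carrier R J. p (free_smult R J r f) = r \<otimes>\<^bsub>R\<^esub> p f)
        \<and> (\<forall>a\<in>I. p (s a) = a))"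

text \<open>Projective R-module = direct summand of a free R-module R^(J) for some index set J,
  whose elements may live in an arbitrary type 'b.\<close>
definition projective_ideal :: "'b itself \<Rightarrow> ('a, 'c) ring_scheme \<Rightarrow> 'a set \<Rightarrow> bool" where
  "projective_ideal (_::'b itself) R I \<longleftrightarrow> (\<exists>J::'b set. summand_of_free R I J)"

end

theory Submission imports Defs "HOL-Algebra.Ring_Divisibility" begin

lemma (in cring) aux_prod4:
  assumes "m1 \<in> carrier R" "m2 \<in> carrier R" "r1 \<in> carrier R" "r2 \<in> carrier R" "a \<in> carrier R" "b \<in> carrier R"
  shows "(m1 \<oplus> r1 \<otimes> a) \<otimes> (m2 \<oplus> r2 \<otimes> b) = m1 \<otimes> (m2 \<oplus> r2 \<otimes> b) \<oplus> ((r1 \<otimes> a) \<otimes> m2 \<oplus> (r1 \<otimes> r2) \<otimes> (a \<otimes> b))"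
  using assms by algebra

lemma (in cring) prime_avoiding:
  assumes SC: "S \<subseteq> carrier R" and S1: "\<one> \<in> S"
    and Sm: "\<And>a b. a\<in>S \<Longrightarrow> b\<in>S \<Longrightarrow> a\<otimes>b \<in> S" and S0: "\<zero> \<notin> S"
  shows "\<exists>Q. primeideal Q R \<and> Q \<inter> S = {}"
proof -
  let ?A = "{J. ideal J R \<and> J \<inter> S = {}}"
  have "\<exists>M\<in>?A. \<forall>X\<in>?A. M \<subseteq> X \<longrightarrow> X = M"
  proof (rule subset_Zorn_nonempty)
    show "?A \<noteq> {}" using zeroideal S0 by auto
    fix C assume C: "C \<noteq> {}" "subset.chain ?A C"
    then have "subset.chain {I. ideal I R} C" by (auto simp: pred_on.chain_def)
    then have "ideal (if C = {} then {\<zero>} else \<Union>C) R" by (rule chain_Union_is_ideal)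
    then have "ideal (\<Union>C) R" using C(1) by simp
    moreover have "\<Union>C \<inter> S = {}" using C(2) by (auto simp: pred_on.chain_def)
    ultimately show "\<Union>C \<in> ?A" by simp
  qed
  then obtain M where M: "ideal M R" "M \<inter> S = {}"
    and max: "\<And>X. ideal X R \<Longrightarrow> X \<inter> S = {} \<Longrightarrow> M \<subseteq> X \<Longrightarrow> X = M" by auto
  have MC: "M \<subseteq> carrier R" by (meson ideal.Icarr[OF M(1)] subsetI)
  have "primeideal M R"
  proof (rule primeidealI[OF M(1) is_cring])
    show "carrier R \<noteq> M"
    proof
      assume "carrier R = M"
      then have "\<one> \<in> M" using one_closed by simp
      then show False using S1 M(2) by blast
    qed
    fix a b assume ab: "a \<in> carrier R" "b \<in> carrier R" "a \<otimes> b \<in> M"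
    show "a \<in> M \<or> b \<in> M"
    proof (rule ccontr)
      assume "\<not> (a \<in> M \<or> b \<in> M)" hence na: "a \<notin> M" "b \<notin> M" by blast+
      have key: "\<exists>s\<in>S. \<exists>m\<in>M. \<exists>r\<in>carrier R. s = m \<oplus> r \<otimes> c" if c: "c \<in> carrier R" "c \<notin> M" for c
      proof -
        let ?X = "set_add R M (PIdl c)"
        have X: "ideal ?X R" using add_ideals[OF M(1) cgenideal_ideal[OF c(1)]] .
        have "M \<subseteq> ?X"
        proof
          fix m assume m: "m \<in> M"
          have "\<zero> \<in> PIdl c" unfolding cgenideal_def using c by (auto intro!: exI[of _ \<zero>])
          moreover have "m = m \<oplus> \<zero>" using m MC by auto
          ultimately show "m \<in> ?X" using m unfolding set_add_def' by blast
        qed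
        moreover have "c \<in> ?X"
        proof -
          have "c \<in> PIdl c" unfolding cgenideal_def using c by (auto intro!: exI[of _ \<one>])
          moreover have "c = \<zero> \<oplus> c" using c by auto
          moreover have "\<zero> \<in> M" using M(1) additive_subgroup.zero_closed ideal.axioms(1) by blast
          ultimately show ?thesis unfolding set_add_def' by blast
        qed
        ultimately have "?X \<noteq> M" using c by auto
        hence "?X \<inter> S \<noteq> {}" using max[OF X] \<open>M \<subseteq> ?X\<close> by blast
        then obtain s where s: "s \<in> S" "s \<in> ?X" by blast
        then obtain m y where "m \<in> M" "y \<in> PIdl c" "s = m \<oplus> y" unfolding set_add_def' by blast
        then show ?thesis using s unfolding cgenideal_def by blast
      qed
      obtain s1 m1 r1 where 1: "s1 \<in> S" "m1 \<in> M" "r1 \<in> carrier R" "s1 = m1 \<oplus> r1 \<otimes> a"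
        using key[OF ab(1) na(1)] by blast
      obtain s2 m2 r2 where 2: "s2 \<in> S" "m2 \<in> M" "r2 \<in> carrier R" "s2 = m2 \<oplus> r2 \<otimes> b"
        using key[OF ab(2) na(2)] by blast
      have c: "m1 \<in> carrier R" "m2 \<in> carrier R" "s1 \<in> carrier R" "s2 \<in> carrier R"
        using 1 2 MC SC by auto
      have eq: "s1 \<otimes> s2 = m1 \<otimes> s2 \<oplus> ((r1 \<otimes> a) \<otimes> m2 \<oplus> (r1 \<otimes> r2) \<otimes> (a \<otimes> b))"
        unfolding 1(4) 2(4) by (rule aux_prod4[OF c(1,2) 1(3) 2(3) ab(1,2)])
      have "m1 \<otimes> s2 \<in> M" using 1(2) c ideal.I_r_closed[OF M(1)] by blast
      moreover have "(r1 \<otimes> a) \<otimes> m2 \<in> M" using 2(2) 1(3) ab ideal.I_l_closed[OF M(1)] by blast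
      moreover have "(r1 \<otimes> r2) \<otimes> (a \<otimes> b) \<in> M" using ab(3) 1(3) 2(3) ideal.I_l_closed[OF M(1)] by blast
      ultimately have "s1 \<otimes> s2 \<in> M" unfolding eq
        using M(1) by (meson additive_subgroup.a_closed ideal.axioms(1))
      moreover have "s1 \<otimes> s2 \<in> S" using Sm 1(1) 2(1) by blast
      ultimately show False using M(2) by blast
    qed
  qed
  thus ?thesis using M(2) by blast
qed

lemma (in cring) minimal_prime_below:
  assumes "primeideal Q R" shows "\<exists>P. minimal_prime R P \<and> P \<subseteq> Q"
proof -
  let ?A = "{carrier R - P | P. primeideal P R \<and> P \<subseteq> Q}"
  have "\<exists>M\<in>?A. \<forall>X\<in>?A. M \<subseteq> X \<longrightarrow> X = M"
  proof (rule subset_Zorn_nonempty)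
    show "?A \<noteq> {}" using assms by auto
    fix C assume C: "C \<noteq> {}" "subset.chain ?A C"
    have chC: "\<forall>X\<in>C. \<forall>Y\<in>C. X \<subseteq> Y \<or> Y \<subseteq> X" using C(2) unfolding subset_chain_def by (rule conjunct2)
    define Ps where "Ps = {P. primeideal P R \<and> P \<subseteq> Q \<and> carrier R - P \<in> C}"
    have CPs: "C = (\<lambda>P. carrier R - P) ` Ps" using C(2) by (auto simp: pred_on.chain_def Ps_def)
    have Ps_ne: "Ps \<noteq> {}" using C CPs by auto
    have PC: "P \<subseteq> carrier R" if "P \<in> Ps" for P
    proof -
      have "primeideal P R" using that unfolding Ps_def by blast
      then show ?thesis by (meson ideal.Icarr[OF primeideal.axioms(1)] subsetI)
    qed
    have chainPs: "P1 \<subseteq> P2 \<or> P2 \<subseteq> P1" if "P1 \<in> Ps" "P2 \<in> Ps" for P1 P2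
    proof -
      have "carrier R - P1 \<in> C" "carrier R - P2 \<in> C" using that unfolding Ps_def by auto
      hence "carrier R - P1 \<subseteq> carrier R - P2 \<or> carrier R - P2 \<subseteq> carrier R - P1"
        by (rule chC[rule_format])
      thus ?thesis using PC that by blast
    qed
    have pr: "primeideal (\<Inter>Ps) R"
    proof (rule primeidealI[OF _ is_cring])
      show "ideal (\<Inter>Ps) R" using i_Intersect[OF _ Ps_ne] unfolding Ps_def
        using primeideal.axioms(1) by blast
      show "carrier R \<noteq> \<Inter>Ps"
      proof
        assume "carrier R = \<Inter>Ps"
        then have "\<one> \<in> \<Inter>Ps" by (metis one_closed)
        then obtain P where "P \<in> Ps" "\<one> \<in> P" using Ps_ne by auto
        then show False unfolding Ps_def
          using ideal.one_imp_carrier primeideal.I_notcarr primeideal.axioms(1) by fastforce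
      qed
      fix a b assume ab: "a \<in> carrier R" "b \<in> carrier R" "a \<otimes> b \<in> \<Inter>Ps"
      show "a \<in> \<Inter>Ps \<or> b \<in> \<Inter>Ps"
      proof (rule ccontr)
        assume "\<not> ?thesis"
        then obtain P1 P2 where P: "P1 \<in> Ps" "P2 \<in> Ps" "a \<notin> P1" "b \<notin> P2" by blast
        have pp: "primeideal P1 R" "primeideal P2 R" using P unfolding Ps_def by auto
        show False
        proof (cases "P1 \<subseteq> P2")
          case True
          have "a \<otimes> b \<in> P1" using ab(3) P(1) by blast
          then have "a \<in> P1 \<or> b \<in> P1" by (rule primeideal.I_prime[OF pp(1) ab(1,2)])
          then show ?thesis using True P(3,4) by blast
        next
          case False
          then have "P2 \<subseteq> P1" using chainPs P by blast
          have "a \<otimes> b \<in> P2" using ab(3) P(2) by blast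
          then have "a \<in> P2 \<or> b \<in> P2" by (rule primeideal.I_prime[OF pp(2) ab(1,2)])
          then show ?thesis using \<open>P2 \<subseteq> P1\<close> P(3,4) by blast
        qed
      qed
    qed
    have "\<Union>C = carrier R - \<Inter>Ps" using CPs Ps_ne by auto
    moreover have "\<Inter>Ps \<subseteq> Q" using Ps_ne unfolding Ps_def by auto
    ultimately show "\<Union>C \<in> ?A" using pr by blast
  qed
  then obtain M where M: "M \<in> ?A" and Mmax: "\<forall>X\<in>?A. M \<subseteq> X \<longrightarrow> X = M" by (rule bexE)
  from M obtain P where P: "primeideal P R" "P \<subseteq> Q" and MP: "M = carrier R - P" by blast
  have max: "carrier R - P' = carrier R - P"
    if "primeideal P' R" "P' \<subseteq> Q" "carrier R - P \<subseteq> carrier R - P'" for P'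
  proof -
    have "carrier R - P' \<in> ?A" using that(1,2) by blast
    then show ?thesis using Mmax that(3) unfolding MP by (meson)
  qed
  have "minimal_prime R P" unfolding minimal_prime_def
  proof (intro conjI allI impI P(1))
    fix Q' assume Q': "primeideal Q' R \<and> Q' \<subseteq> P"
    have "carrier R - Q' = carrier R - P" using max[of Q'] Q' P(2) by blast
    moreover have "Q' \<subseteq> carrier R" "P \<subseteq> carrier R"
      using Q' P(1) by (meson ideal.Icarr primeideal.axioms(1) subsetI)+
    ultimately show "Q' = P" by blast
  qed
  thus ?thesis using P(2) by blast
qed


lemma (in ring) finsum_in_ideal:
  assumes A: "ideal A R" and K: "finite K" and h: "\<And>j. j \<in> K \<Longrightarrow> h j \<in> A"
  shows "finsum R h K \<in> A"
  using K h
proof (induction K rule: finite_induct)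
  case empty
  have "\<zero> \<in> A" using additive_subgroup.zero_closed[OF ideal.axioms(1)[OF A]] .
  then show ?case by simp
next
  case (insert j K)
  have AC: "A \<subseteq> carrier R" by (meson ideal.Icarr[OF A] subsetI)
  have "h \<in> insert j K \<rightarrow> carrier R" using insert.prems AC by blast
  then have "finsum R h (insert j K) = h j \<oplus> finsum R h K"
    using insert by (simp add: finsum_insert)
  moreover have "h j \<in> A" "finsum R h K \<in> A" using insert by auto
  ultimately show ?case using A by (metis additive_subgroup.a_closed ideal.axioms(1))
qed

lemma (in cring) aux_kill:
  assumes "t \<in> carrier R" "a \<in> carrier R" "t \<otimes> a = a"
  shows "(\<one> \<ominus> t) \<otimes> a = \<zero>"
proof -
  have "(\<one> \<ominus> t) \<otimes> a = a \<ominus> t \<otimes> a" using assms(1,2) by algebra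
  then show ?thesis using assms by (simp add: a_minus_def r_neg)
qed

lemma (in cring) proj_main:
  assumes I: "ideal I R"
    and s: "s \<in> I \<rightarrow> free_carrier R J" and p: "p \<in> free_carrier R J \<rightarrow> I"
    and sadd: "\<forall>a\<in>I. \<forall>b\<in>I. s (a \<oplus> b) = free_add R J (s a) (s b)"
    and smul: "\<forall>r\<in>carrier R. \<forall>a\<in>I. s (r \<otimes> a) = free_smult R J r (s a)"
    and padd: "\<forall>f\<in>free_carrier R J. \<forall>g\<in>free_carrier R J. p (free_add R J f g) = p f \<oplus> p g"
    and pmul: "\<forall>r\<in>carrier R. \<forall>f\<in>free_carrier R J. p (free_smult R J r f) = r \<otimes> p f"
    and ps: "\<forall>a\<in>I. p (s a) = a"
  shows "fg_ideal R I \<or> (\<exists>S. S \<subseteq> carrier R \<and> \<one> \<in> S \<and> (\<forall>a\<in>S. \<forall>b\<in>S. a\<otimes>b \<in> S)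
            \<and> \<zero> \<notin> S \<and> (\<forall>a\<in>I. \<exists>t\<in>S. t \<otimes> a = \<zero>))"
proof -
  have IC: "I \<subseteq> carrier R" by (meson ideal.Icarr[OF I] subsetI)
  define e where "e j = (\<lambda>k\<in>J. if k = j then \<one> else \<zero>)" for j
  define x where "x j = p (e j)" for j
  have e_in: "e j \<in> free_carrier R J" if "j \<in> J" for j
  proof -
    have "{k \<in> J. e j k \<noteq> \<zero>} \<subseteq> {j}" unfolding e_def by auto
    then show ?thesis unfolding free_carrier_def e_def by (auto intro: finite_subset)
  qed
  have xI: "x j \<in> I" if "j \<in> J" for j using p e_in[OF that] unfolding x_def by blast
  have xC: "x j \<in> carrier R" if "j \<in> J" for j using xI[OF that] IC by blast
  have sC: "s b j \<in> carrier R" if "b \<in> I" "j \<in> J" for b j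
    using s that unfolding free_carrier_def by (auto simp: PiE_def Pi_def)
  define z where "z = (\<lambda>k\<in>J. (\<zero>::'a))"
  have z_in: "z \<in> free_carrier R J" unfolding z_def free_carrier_def by auto
  have pz: "p z = \<zero>"
  proof -
    have "free_smult R J \<zero> z = z" unfolding free_smult_def z_def by (auto simp: restrict_def)
    then have "p z = \<zero> \<otimes> p z" using pmul z_in by (metis zero_closed)
    then show ?thesis using p z_in IC by auto
  qed
  have expand: "p (\<lambda>k\<in>J. if k \<in> K then f k else \<zero>) = finsum R (\<lambda>j. f j \<otimes> x j) K"
    if f: "f \<in> free_carrier R J" and K: "finite K" "K \<subseteq> J" for f K
    using K
  proof (induction K rule: finite_induct)
    case empty
    have "(\<lambda>k\<in>J. if k \<in> {} then f k else \<zero>) = z" unfolding z_def by simp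
    then show ?case using pz by simp
  next
    case (insert j K)
    have fC: "f k \<in> carrier R" if "k \<in> J" for k using f that unfolding free_carrier_def by auto
    let ?g = "\<lambda>K. (\<lambda>k\<in>J. if k \<in> K then f k else \<zero>)"
    have gin: "?g K \<in> free_carrier R J"
    proof -
      have "{k \<in> J. ?g K k \<noteq> \<zero>} \<subseteq> {k \<in> J. f k \<noteq> \<zero>}" by auto
      moreover have "finite {k \<in> J. f k \<noteq> \<zero>}" using f unfolding free_carrier_def by blast
      ultimately have "finite {k \<in> J. ?g K k \<noteq> \<zero>}" by (meson finite_subset)
      moreover have "?g K \<in> J \<rightarrow>\<^sub>E carrier R" unfolding restrict_PiE_iff using fC by simp
      ultimately show ?thesis unfolding free_carrier_def by blast
    qed
    have jJ: "j \<in> J" using insert by auto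
    have eq: "?g (insert j K) = free_add R J (?g K) (free_smult R J (f j) (e j))"
      unfolding free_add_def free_smult_def e_def
      using fC insert.hyps(2) jJ by (auto simp: restrict_def fun_eq_iff)
    have smin: "free_smult R J (f j) (e j) \<in> free_carrier R J"
    proof -
      have "{k \<in> J. free_smult R J (f j) (e j) k \<noteq> \<zero>} \<subseteq> {j}"
        unfolding free_smult_def e_def using fC jJ by auto
      then show ?thesis unfolding free_carrier_def free_smult_def e_def
        using fC jJ by (auto intro: finite_subset)
    qed
    have "p (?g (insert j K)) = p (?g K) \<oplus> f j \<otimes> x j"
      unfolding eq x_def using padd pmul gin smin e_in[OF jJ] fC[OF jJ] by simp
    also have "\<dots> = finsum R (\<lambda>j. f j \<otimes> x j) K \<oplus> f j \<otimes> x j"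
    proof -
      have "K \<subseteq> J" using insert.prems by blast
      then have IH: "p (?g K) = finsum R (\<lambda>j. f j \<otimes> x j) K" by (rule insert.IH)
      show ?thesis by (simp only: IH)
    qed
    also have "\<dots> = finsum R (\<lambda>j. f j \<otimes> x j) (insert j K)"
    proof -
      have "(\<lambda>j. f j \<otimes> x j) \<in> insert j K \<rightarrow> carrier R" using insert fC xC by auto
      then show ?thesis using insert fC[OF jJ] xC[OF jJ]
        by (simp add: finsum_insert a_comm)
    qed
    finally show ?case .
  qed
  have expand_I: "a = finsum R (\<lambda>j. s a j \<otimes> x j) K"
    if a: "a \<in> I" and K: "finite K" "K \<subseteq> J" "{j \<in> J. s a j \<noteq> \<zero>} \<subseteq> K" for a K
  proof -
    have sa: "s a \<in> free_carrier R J" using s a by blast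
    have "(\<lambda>k\<in>J. if k \<in> K then s a k else \<zero>) = s a"
      using sa K(3) unfolding free_carrier_def by (auto simp: fun_eq_iff PiE_def extensional_def)
    then show ?thesis using expand[OF sa K(1,2)] ps a by simp
  qed
  have comm: "a \<otimes> s b j = b \<otimes> s a j" if "a \<in> I" "b \<in> I" "j \<in> J" for a b j
  proof -
    have "s (a \<otimes> b) = free_smult R J a (s b)" using smul that IC by blast
    moreover have "s (b \<otimes> a) = free_smult R J b (s a)" using smul that IC by blast
    moreover have "a \<otimes> b = b \<otimes> a" using that IC m_comm by blast
    ultimately have "free_smult R J a (s b) = free_smult R J b (s a)" by simp
    then show ?thesis using that unfolding free_smult_def by (metis restrict_apply')
  qed
  define t where "t K = finsum R (\<lambda>j. s (x j) j) K" for K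
  have tC: "t K \<in> carrier R" if "K \<subseteq> J" for K
    unfolding t_def using sC xI that by (intro finsum_closed) auto
  have t_mult: "t K \<otimes> b = finsum R (\<lambda>j. s b j \<otimes> x j) K" if b: "b \<in> I" and K: "finite K" "K \<subseteq> J" for b K
  proof -
    have "t K \<otimes> b = finsum R (\<lambda>j. s (x j) j \<otimes> b) K"
      unfolding t_def using K b IC sC xI by (intro finsum_ldistr) auto
    also have "\<dots> = finsum R (\<lambda>j. s b j \<otimes> x j) K"
    proof (rule finsum_cong')
      show "(\<lambda>j. s b j \<otimes> x j) \<in> K \<rightarrow> carrier R" using K b sC xC by auto
      fix j assume j: "j \<in> K"
      then have jJ: "j \<in> J" using K by auto
      have "s (x j) j \<otimes> b = b \<otimes> s (x j) j" using m_comm sC[OF xI[OF jJ] jJ] b IC by blast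
      also have "\<dots> = x j \<otimes> s b j" using comm[OF xI[OF jJ] b jJ] by simp
      also have "\<dots> = s b j \<otimes> x j" using m_comm sC[OF b jJ] xC[OF jJ] by blast
      finally show "s (x j) j \<otimes> b = s b j \<otimes> x j" .
    qed simp
    finally show ?thesis .
  qed
  have t_idl: "t K \<otimes> b \<in> Idl (x ` K)" if b: "b \<in> I" and K: "finite K" "K \<subseteq> J" for b K
  proof -
    have xK: "x ` K \<subseteq> carrier R" using K xC by auto
    have "s b j \<otimes> x j \<in> Idl (x ` K)" if "j \<in> K" for j
      using genideal_self[OF xK] that K sC[OF b] ideal.I_l_closed[OF genideal_ideal[OF xK]] by blast
    then show ?thesis unfolding t_mult[OF b K] by (rule finsum_in_ideal[OF genideal_ideal[OF xK] K(1)])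
  qed
  define S where "S = {\<one> \<ominus> u | u. u \<in> carrier R \<and> (\<exists>H. finite H \<and> H \<subseteq> J \<and> (\<forall>b\<in>I. u \<otimes> b \<in> Idl (x ` H)))}"
  have S_I: "\<one> \<ominus> u \<in> S" if "u \<in> carrier R" "finite H" "H \<subseteq> J" "\<forall>b\<in>I. u \<otimes> b \<in> Idl (x ` H)" for u H
    unfolding S_def using that by blast
  show ?thesis
  proof (cases "\<zero> \<in> S")
    case True
    then obtain u H where u: "u \<in> carrier R" "finite H" "H \<subseteq> J" "\<forall>b\<in>I. u \<otimes> b \<in> Idl (x ` H)" "\<zero> = \<one> \<ominus> u"
      unfolding S_def by blast
    have "\<one> = (\<one> \<ominus> u) \<oplus> u" using u(1) by algebra
    then have "\<one> = \<zero> \<oplus> u" unfolding u(5)[symmetric] .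
    then have "u = \<one>" using u(1) by simp
    have "I \<subseteq> Idl (x ` H)"
    proof
      fix b assume b: "b \<in> I"
      then have "\<one> \<otimes> b \<in> Idl (x ` H)" using u(4) \<open>u = \<one>\<close> by blast
      moreover have "b \<in> carrier R" using b IC by blast
      ultimately show "b \<in> Idl (x ` H)" by simp
    qed
    moreover have "Idl (x ` H) \<subseteq> I" using genideal_minimal[OF I] xI u(3) by blast
    moreover have "x ` H \<subseteq> carrier R" using xC u(3) by blast
    ultimately have "fg_ideal R I" unfolding fg_ideal_def using u(2) by blast
    then show ?thesis by blast
  next
    case False
    have SC: "S \<subseteq> carrier R" unfolding S_def by auto
    have S1: "\<one> \<in> S"
    proof -
      have "\<forall>b\<in>I. \<zero> \<otimes> b \<in> Idl (x ` {})"
        using IC genideal_ideal[of "{}"] additive_subgroup.zero_closed ideal.axioms(1) by fastforce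
      then have "\<one> \<ominus> \<zero> \<in> S" by (intro S_I[of _ "{}"]) auto
      moreover have "\<one> \<ominus> \<zero> = \<one>" by algebra
      ultimately show ?thesis by simp
    qed
    have Sm: "a \<otimes> b \<in> S" if ab0: "a \<in> S" "b \<in> S" for a b
    proof -
      obtain u H where u: "u \<in> carrier R" "finite H" "H \<subseteq> J" "\<forall>b\<in>I. u \<otimes> b \<in> Idl (x ` H)" "a = \<one> \<ominus> u"
        using ab0(1) unfolding S_def by blast
      obtain v G where v: "v \<in> carrier R" "finite G" "G \<subseteq> J" "\<forall>b\<in>I. v \<otimes> b \<in> Idl (x ` G)" "b = \<one> \<ominus> v"
        using ab0(2) unfolding S_def by blast
      let ?w = "u \<oplus> v \<ominus> u \<otimes> v"
      have wC: "?w \<in> carrier R" using u v by auto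
      have ab: "a \<otimes> b = \<one> \<ominus> ?w" using u(1,5) v(1,5) by algebra
      have xHG: "x ` (H \<union> G) \<subseteq> carrier R" using xC u(3) v(3) by blast
      have idl: "ideal (Idl (x ` (H \<union> G))) R" using genideal_ideal[OF xHG] .
      have mono1: "Idl (x ` H) \<subseteq> Idl (x ` (H \<union> G))" using subset_Idl_subset[OF xHG] by blast
      have mono2: "Idl (x ` G) \<subseteq> Idl (x ` (H \<union> G))" using subset_Idl_subset[OF xHG] by blast
      have "?w \<otimes> c \<in> Idl (x ` (H \<union> G))" if c: "c \<in> I" for c
      proof -
        have cC: "c \<in> carrier R" using c IC by blast
        have eq: "?w \<otimes> c = u \<otimes> c \<oplus> v \<otimes> c \<ominus> u \<otimes> (v \<otimes> c)" using u(1) v(1) cC by algebra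
        have 1: "u \<otimes> c \<in> Idl (x ` (H \<union> G))" using u(4) c mono1 by blast
        have 2: "v \<otimes> c \<in> Idl (x ` (H \<union> G))" using v(4) c mono2 by blast
        have 3: "u \<otimes> (v \<otimes> c) \<in> Idl (x ` (H \<union> G))" using ideal.I_l_closed[OF idl 2 u(1)] .
        have 4: "\<ominus> (u \<otimes> (v \<otimes> c)) \<in> Idl (x ` (H \<union> G))"
          by (rule additive_subgroup.a_inv_closed[OF ideal.axioms(1)[OF idl] 3])
        have 5: "u \<otimes> c \<oplus> v \<otimes> c \<in> Idl (x ` (H \<union> G))"
          by (rule additive_subgroup.a_closed[OF ideal.axioms(1)[OF idl] 1 2])
        have 6: "u \<otimes> c \<oplus> v \<otimes> c \<ominus> u \<otimes> (v \<otimes> c) \<in> Idl (x ` (H \<union> G))"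
          unfolding a_minus_def by (rule additive_subgroup.a_closed[OF ideal.axioms(1)[OF idl] 5 4])
        show ?thesis by (subst eq) (rule 6)
      qed
      then have "\<one> \<ominus> ?w \<in> S" using wC u(2,3) v(2,3) by (intro S_I[of _ "H \<union> G"]) auto
      then show ?thesis unfolding ab .
    qed
    have kill: "\<exists>c\<in>S. c \<otimes> a = \<zero>" if a: "a \<in> I" for a
    proof -
      let ?K = "{j \<in> J. s a j \<noteq> \<zero>}"
      have K: "finite ?K" "?K \<subseteq> J" using s a unfolding free_carrier_def by auto
      have ta: "t ?K \<otimes> a = a" using t_mult[OF a K] expand_I[OF a K order.refl] by simp
      have aC: "a \<in> carrier R" using a IC by blast
      have "(\<one> \<ominus> t ?K) \<otimes> a = \<zero>" by (rule aux_kill[OF tC[OF K(2)] aC ta])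
      moreover have "\<one> \<ominus> t ?K \<in> S" using tC[OF K(2)] t_idl K by (intro S_I[of _ ?K]) auto
      ultimately show ?thesis by blast
    qed
    show ?thesis
      apply (rule disjI2)
      apply (rule exI[of _ S])
      using SC S1 Sm False kill by blast
  qed
qed

theorem corollary3p8:
  fixes R (structure) and I :: "'a set"
  assumes "cring R"
    and "ideal I R"
    and "\<forall>P. minimal_prime R P \<longrightarrow> \<not> I \<subseteq> P"
    and "projective_ideal TYPE('b) R I"
  shows "fg_ideal R I"
proof -
  interpret cring R by fact
  obtain J :: "'b set" where "summand_of_free R I J" using assms(4) unfolding projective_ideal_def by blast
  then obtain s p where sp: "s \<in> I \<rightarrow> free_carrier R J" "p \<in> free_carrier R J \<rightarrow> I"
        "\<forall>a\<in>I. \<forall>b\<in>I. s (a \<oplus> b) = free_add R J (s a) (s b)"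
        "\<forall>r\<in>carrier R. \<forall>a\<in>I. s (r \<otimes> a) = free_smult R J r (s a)"
        "\<forall>f\<in>free_carrier R J. \<forall>g\<in>free_carrier R J. p (free_add R J f g) = p f \<oplus> p g"
        "\<forall>r\<in>carrier R. \<forall>f\<in>free_carrier R J. p (free_smult R J r f) = r \<otimes> p f"
        "\<forall>a\<in>I. p (s a) = a"
    unfolding summand_of_free_def by blast
  show ?thesis
  proof (rule ccontr)
    assume nfg: "\<not> fg_ideal R I"
    then obtain S where S: "S \<subseteq> carrier R" "\<one> \<in> S" "\<forall>a\<in>S. \<forall>b\<in>S. a\<otimes>b \<in> S" "\<zero> \<notin> S"
      "\<forall>a\<in>I. \<exists>t\<in>S. t \<otimes> a = \<zero>"
      using proj_main[OF assms(2) sp] by blast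
    obtain Q where Q: "primeideal Q R" "Q \<inter> S = {}" using prime_avoiding[OF S(1,2) _ S(4)] S(3) by blast
    obtain P where P: "minimal_prime R P" "P \<subseteq> Q" using minimal_prime_below[OF Q(1)] by blast
    have pP: "primeideal P R" using P(1) unfolding minimal_prime_def by blast
    have "I \<subseteq> P"
    proof
      fix a assume a: "a \<in> I"
      then obtain c where c: "c \<in> S" "c \<otimes> a = \<zero>" using S(5) by blast
      have "\<zero> \<in> P" by (rule additive_subgroup.zero_closed[OF ideal.axioms(1)[OF primeideal.axioms(1)[OF pP]]])
      then have "c \<otimes> a \<in> P" using c(2) by simp
      moreover have aC: "a \<in> carrier R" using ideal.Icarr[OF assms(2) a] .
      moreover have cC: "c \<in> carrier R" using c(1) S(1) by blast
      ultimately have "c \<in> P \<or> a \<in> P" using primeideal.I_prime[OF pP cC aC] by blast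
      moreover have "c \<notin> P" using c(1) Q(2) P(2) by blast
      ultimately show "a \<in> P" by blast
    qed
    then show False using assms(3) P(1) by blast
  qed
qed

end
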